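(* Let $\mathbf{A}$ be a 3-dimensional cyclic Leibniz algebra over $\mathbb{C}$. Then $\mathbf{A}$ is isomorphic to a Leibniz algebra with basis $\{a,a^2,a^3\}$, where $aa=a^2$, $aa^2=a^3$, $a^2v=a^3v=0$ for all $v$, and $aa^3$ is given by one and only one of the following: (1) $aa^3=0$; (2) $aa^3=a^3$; (3) $aa^3=a^2+\alpha_3a^3$ with $\alpha_3\in\mathbb{C}/\sim$, where $\alpha\sim\alpha'$ iff $\alpha'=\pm\alpha$. Here "one and only one" means that algebras from different cases are non-isomorphic, and in case (3) the algebras with parameters $\alpha_3,\alpha_3'$ are isomorphic iff $\alpha_3'=\pm\alpha_3$.
   Context: A (left) Leibniz algebra is a vector space with a bilinear product such that $x(yz)=(xy)z+y(xz)$ for all $x,y,z$. A cyclic Leibniz algebra is a Leibniz algebra generated by a single element. For an element $x$ set $x^1=x$ and $x^{j+1}=x\,x^j$. *)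

theory Defs
  imports Complex_Main "HOL-Library.Product_Plus"
begin

definition leibniz_algebra ::
  "(complex \<Rightarrow> 'a::ab_group_add \<Rightarrow> 'a) \<Rightarrow> ('a \<Rightarrow> 'a \<Rightarrow> 'a) \<Rightarrow> bool" where
  "leibniz_algebra scale mult \<longleftrightarrow>
     vector_space scale \<and>
     (\<forall>x y z. mult (x + y) z = mult x z + mult y z) \<and>
     (\<forall>x y z. mult x (y + z) = mult x y + mult x z) \<and>
     (\<forall>c x y. mult (scale c x) y = scale c (mult x y)) \<and>
     (\<forall>c x y. mult x (scale c y) = scale c (mult x y)) \<and>
     (\<forall>x y z. mult x (mult y z) = mult (mult x y) z + mult y (mult x z))"

definition gen_subalgebra ::
  "(complex \<Rightarrow> 'a::ab_group_add \<Rightarrow> 'a) \<Rightarrow> ('a \<Rightarrow> 'a \<Rightarrow> 'a) \<Rightarrow> 'a \<Rightarrow> 'a set" where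
  "gen_subalgebra scale mult x =
     \<Inter>{S. module.subspace scale S \<and> x \<in> S \<and> (\<forall>u\<in>S. \<forall>v\<in>S. mult u v \<in> S)}"

definition cyclic_algebra ::
  "(complex \<Rightarrow> 'a::ab_group_add \<Rightarrow> 'a) \<Rightarrow> ('a \<Rightarrow> 'a \<Rightarrow> 'a) \<Rightarrow> bool" where
  "cyclic_algebra scale mult \<longleftrightarrow> (\<exists>x. gen_subalgebra scale mult x = UNIV)"

definition alg_iso ::
  "(complex \<Rightarrow> 'a::plus \<Rightarrow> 'a) \<Rightarrow> ('a \<Rightarrow> 'a \<Rightarrow> 'a) \<Rightarrow>
   (complex \<Rightarrow> 'b::plus \<Rightarrow> 'b) \<Rightarrow> ('b \<Rightarrow> 'b \<Rightarrow> 'b) \<Rightarrow> ('a \<Rightarrow> 'b) \<Rightarrow> bool" where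
  "alg_iso s1 m1 s2 m2 f \<longleftrightarrow> bij f \<and>
     (\<forall>x y. f (x + y) = f x + f y) \<and>
     (\<forall>c x. f (s1 c x) = s2 c (f x)) \<and>
     (\<forall>x y. f (m1 x y) = m2 (f x) (f y))"

definition alg_isomorphic ::
  "(complex \<Rightarrow> 'a::plus \<Rightarrow> 'a) \<Rightarrow> ('a \<Rightarrow> 'a \<Rightarrow> 'a) \<Rightarrow>
   (complex \<Rightarrow> 'b::plus \<Rightarrow> 'b) \<Rightarrow> ('b \<Rightarrow> 'b \<Rightarrow> 'b) \<Rightarrow> bool" where
  "alg_isomorphic s1 m1 s2 m2 \<longleftrightarrow> (\<exists>f. alg_iso s1 m1 s2 m2 f)"

text \<open>Model algebras on C^3, coordinates (x1,x2,x3) standing for x1 a + x2 a^2 + x3 a^3.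
  Products: a a = a^2, a a^2 = a^3, a a^3 = p a^2 + q a^3, a^2 v = a^3 v = 0.\<close>
definition cscale3 :: "complex \<Rightarrow> complex \<times> complex \<times> complex \<Rightarrow> complex \<times> complex \<times> complex" where
  "cscale3 c v = (c * fst v, c * fst (snd v), c * snd (snd v))"

definition model_mult :: "complex \<Rightarrow> complex \<Rightarrow>
    complex \<times> complex \<times> complex \<Rightarrow> complex \<times> complex \<times> complex \<Rightarrow> complex \<times> complex \<times> complex" where
  "model_mult p q u v =
     (0, fst u * (fst v + p * snd (snd v)), fst u * (fst (snd v) + q * snd (snd v)))"

definition model_params :: "(complex \<times> complex) set" where
  "model_params = {(0, 0), (0, 1)} \<union> {(1, \<alpha>) | \<alpha>. True}"

end

theory Submission imports Defs begin

locale leib = vector_space scale for scale :: "complex \<Rightarrow> 'a::ab_group_add \<Rightarrow> 'a" (infixr "*s" 75) +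
  fixes mult :: "'a \<Rightarrow> 'a \<Rightarrow> 'a"
  assumes addL: "mult (x + y) z = mult x z + mult y z"
    and addR: "mult x (y + z) = mult x y + mult x z"
    and scL: "mult (c *s x) y = c *s (mult x y)"
    and scR: "mult x (c *s y) = c *s (mult x y)"
    and jac: "mult x (mult y z) = mult (mult x y) z + mult y (mult x z)"
begin

lemma mult0L[simp]: "mult 0 y = 0" using addL[of 0 0 y] by simp
lemma mult0R[simp]: "mult y 0 = 0" using addR[of y 0 0] by simp

fun pw :: "'a \<Rightarrow> nat \<Rightarrow> 'a" where
  "pw x 0 = x" | "pw x (Suc k) = mult x (pw x k)"

lemma ann: "mult (pw x (Suc k)) v = 0"
proof (induction k arbitrary: v)
  case 0
  show ?case using jac[of x x v] by simp
next
  case (Suc k)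
  have "mult (pw x (Suc (Suc k))) v = mult x (mult (pw x (Suc k)) v) - mult (pw x (Suc k)) (mult x v)"
    using jac[of x "pw x (Suc k)" v] by (simp add: algebra_simps)
  then show ?case using Suc by simp
qed

lemma multx_span: assumes "\<forall>t\<in>T. mult x t \<in> span T" "v \<in> span T" shows "mult x v \<in> span T"
  using assms(2)
proof (induction rule: span_induct_alt)
  case base then show ?case by (simp add: span_zero)
next
  case (step c y w) then show ?case using assms(1) by (simp add: addR scR span_add span_scale)
qed

lemma closed_univ: assumes "x \<in> T" "\<forall>t\<in>T. mult x t \<in> span T"
  and gen: "gen_subalgebra scale mult x = UNIV"
  shows "span T = UNIV"
proof -
  have pwT: "pw x k \<in> span T" for k
    by (induction k) (auto simp: assms(1) span_base multx_span[OF assms(2)])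
  have cl: "mult u v \<in> span (range (pw x))" if "u \<in> span (range (pw x))" "v \<in> span (range (pw x))" for u v
    using that(1)
  proof (induction rule: span_induct_alt)
    case base then show ?case by (simp add: span_zero)
  next
    case (step c y w)
    obtain k where y: "y = pw x k" using step(1) by auto
    have "mult y v \<in> span (range (pw x))"
    proof (cases k)
      case 0
      have "mult x v \<in> span (range (pw x))"
        by (rule multx_span[OF _ that(2)]) (auto intro!: span_base simp: image_iff, metis pw.simps(2))
      then show ?thesis using y 0 by simp
    next
      case (Suc m) then show ?thesis using y ann by (simp add: span_zero)
    qed
    then show ?case using step by (simp add: addL scL span_add span_scale)
  qed
  have "gen_subalgebra scale mult x \<subseteq> span (range (pw x))"
    unfolding gen_subalgebra_def
  proof (intro Inter_lower, safe)
    show "x \<in> span (range (pw x))" by (metis pw.simps(1) rangeI span_base)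
  qed (use cl in auto)
  moreover have "span (range (pw x)) \<subseteq> span T"
    using pwT by (intro span_minimal) auto
  ultimately show ?thesis using gen by auto
qed

definition gmap :: "'a \<Rightarrow> 'a \<Rightarrow> 'a \<Rightarrow> complex \<times> complex \<times> complex \<Rightarrow> 'a" where
  "gmap u1 u2 u3 v = fst v *s u1 + fst (snd v) *s u2 + snd (snd v) *s u3"

lemma model_iso:
  assumes ind: "\<And>c1 c2 c3. c1 *s u1 + c2 *s u2 + c3 *s u3 = 0 \<Longrightarrow> c1 = 0 \<and> c2 = 0 \<and> c3 = 0"
    and sp: "\<And>v. \<exists>c1 c2 c3. v = c1 *s u1 + c2 *s u2 + c3 *s u3"
    and m11: "mult u1 u1 = u2" and m12: "mult u1 u2 = u3" and m13: "mult u1 u3 = p *s u2 + q *s u3"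
    and a2: "\<And>v. mult u2 v = 0" and a3: "\<And>v. mult u3 v = 0"
  shows "alg_isomorphic scale mult cscale3 (model_mult p q)"
proof -
  let ?g = "gmap u1 u2 u3"
  have gadd: "?g (x + y) = ?g x + ?g y" for x y
    by (simp add: gmap_def algebra_simps)
  have gsc: "?g (cscale3 c x) = c *s ?g x" for c x
    by (simp add: gmap_def cscale3_def algebra_simps)
  have gm: "?g (model_mult p q x y) = mult (?g x) (?g y)" for x y
    by (simp add: gmap_def model_mult_def addL addR scL scR m11 m12 m13 a2 a3 algebra_simps)
  have inj: "inj ?g"
  proof (rule injI)
    fix x y assume "?g x = ?g y"
    then have "(fst x - fst y) *s u1 + (fst (snd x) - fst (snd y)) *s u2 + (snd (snd x) - snd (snd y)) *s u3 = 0"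
      by (simp add: gmap_def algebra_simps)
    from ind[OF this] show "x = y" by (simp add: prod_eq_iff)
  qed
  have surj: "surj ?g"
    unfolding surj_def
  proof
    fix v
    from sp[of v] obtain c1 c2 c3 where "v = c1 *s u1 + c2 *s u2 + c3 *s u3" by blast
    then have "v = ?g (c1, c2, c3)" by (simp add: gmap_def)
    then show "\<exists>x. v = ?g x" by blast
  qed
  have bij: "bij ?g" using inj surj by (simp add: bij_def)
  define f where "f = inv ?g"
  have gf: "?g (f x) = x" for x unfolding f_def using surj by (simp add: surj_f_inv_f)
  have fg: "f (?g x) = x" for x unfolding f_def using inj by (simp add: inv_f_f)
  have "alg_iso scale mult cscale3 (model_mult p q) f"
    unfolding alg_iso_def
  proof (intro conjI allI)
    show "bij f" unfolding f_def using bij by (rule bij_imp_bij_inv)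
    fix x y c
    show "f (x + y) = f x + f y" by (metis fg gf gadd)
    show "f (c *s x) = cscale3 c (f x)" by (metis fg gf gsc)
    show "f (mult x y) = model_mult p q (f x) (f y)" by (metis fg gf gm)
  qed
  then show ?thesis unfolding alg_isomorphic_def by blast
qed

lemma scaled_iso:
  assumes t: "t \<noteq> 0"
    and ind: "\<And>c1 c2 c3. c1 *s a + c2 *s b + c3 *s c = 0 \<Longrightarrow> c1 = 0 \<and> c2 = 0 \<and> c3 = 0"
    and sp: "\<And>v. \<exists>c1 c2 c3. v = c1 *s a + c2 *s b + c3 *s c"
    and m11: "mult a a = b" and m12: "mult a b = c" and m13: "mult a c = \<beta> *s b + \<gamma> *s c"
    and a2: "\<And>v. mult b v = 0" and a3: "\<And>v. mult c v = 0"
  shows "alg_isomorphic scale mult cscale3 (model_mult (t^2 * \<beta>) (t * \<gamma>))"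
proof (rule model_iso[of "t *s a" "(t^2) *s b" "(t^3) *s c"])
  fix c1 c2 c3 assume "c1 *s t *s a + c2 *s t\<^sup>2 *s b + c3 *s t ^ 3 *s c = 0"
  then have "(c1 * t) *s a + (c2 * t^2) *s b + (c3 * t^3) *s c = 0" by simp
  from ind[OF this] t show "c1 = 0 \<and> c2 = 0 \<and> c3 = 0" by simp
next
  fix v
  from sp[of v] obtain k1 k2 k3 where v: "v = k1 *s a + k2 *s b + k3 *s c" by blast
  have "v = (k1 / t) *s t *s a + (k2 / t^2) *s t\<^sup>2 *s b + (k3 / t^3) *s t ^ 3 *s c"
    using t by (simp add: v)
  then show "\<exists>c1 c2 c3. v = c1 *s t *s a + c2 *s t\<^sup>2 *s b + c3 *s t ^ 3 *s c" by blast
next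
  show "mult (t *s a) (t *s a) = t\<^sup>2 *s b" by (simp add: scL scR m11 power2_eq_square)
  show "mult (t *s a) (t\<^sup>2 *s b) = t ^ 3 *s c" by (simp add: scL scR m12 power3_eq_cube power2_eq_square mult.assoc)
  show "mult (t *s a) (t ^ 3 *s c) = (t\<^sup>2 * \<beta>) *s t\<^sup>2 *s b + (t * \<gamma>) *s t ^ 3 *s c"
    by (simp add: scL scR m13 scale_right_distrib power3_eq_cube power2_eq_square mult_ac)
  show "mult (t\<^sup>2 *s b) v = 0" for v by (simp add: scL a2)
  show "mult (t ^ 3 *s c) v = 0" for v by (simp add: scL a3)
qed

lemma solve_lin: assumes "c3 \<noteq> 0" "w + c3 *s c = 0" "w \<in> span S" shows "c \<in> span S"
proof -
  have e: "c = (- 1 / c3) *s w"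
  proof -
    have "w = - (c3 *s c)" using assms(2) by (simp add: eq_neg_iff_add_eq_0)
    then show ?thesis using assms(1) by simp
  qed
  show ?thesis by (subst e) (rule span_scale[OF assms(3)])
qed

lemma structure_lem:
  assumes gen: "gen_subalgebra scale mult x = UNIV" and d3: "dim (UNIV :: 'a set) = 3"
  defines "b \<equiv> mult x x" and "c \<equiv> mult x (mult x x)"
  shows "\<exists>\<beta> \<gamma>. mult x c = \<beta> *s b + \<gamma> *s c \<and>
     (\<forall>c1 c2 c3. c1 *s x + c2 *s b + c3 *s c = 0 \<longrightarrow> c1 = 0 \<and> c2 = 0 \<and> c3 = 0) \<and>
     (\<forall>v. \<exists>c1 c2 c3. v = c1 *s x + c2 *s b + c3 *s c)"
proof -
  define a where "a = x"
  define d where "d = mult x c"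
  have a2: "mult b v = 0" for v using ann[of x 0 v] by (simp add: b_def)
  have a3: "mult c v = 0" for v using ann[of x 1 v] by (simp add: c_def)
  have a4: "mult d v = 0" for v using ann[of x "Suc (Suc 0)" v] by (simp add: c_def d_def)
  have nb: "b \<notin> span {a}"
  proof
    assume "b \<in> span {a}"
    then have "span {a} = UNIV" using closed_univ[OF _ _ gen, of "{a}"] by (simp add: a_def b_def)
    then have "dim (UNIV :: 'a set) \<le> card {a}" using dim_le_card[of UNIV "{a}"] by simp
    then show False using d3 by simp
  qed
  have na: "a \<noteq> 0" using nb span_zero unfolding b_def a_def by force
  have nb0: "b \<noteq> 0" using nb span_zero by force
  have nc: "c \<notin> span {b, a}"
  proof
    assume "c \<in> span {b, a}"
    then have "span {b, a} = UNIV" using closed_univ[OF _ _ gen, of "{b, a}"]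
      by (simp add: a_def b_def c_def span_base)
    then have "dim (UNIV :: 'a set) \<le> card {b, a}" using dim_le_card[of UNIV "{b, a}"] by simp
    moreover have "card {b, a} \<le> 2" by (cases "a = b") auto
    ultimately show False using d3 by simp
  qed
  have nd: "d \<in> span {c, b, a}"
  proof (rule ccontr)
    assume nd: "d \<notin> span {c, b, a}"
    have "independent {a}" using na independent_insertI[of a "{}"] independent_empty by auto
    then have "independent {b, a}" using independent_insertI[OF nb] by blast
    then have "independent {c, b, a}" using independent_insertI[OF nc] by blast
    then have ind: "independent {d, c, b, a}" using independent_insertI[OF nd] by blast
    have "b \<noteq> a" using nb span_base by force
    moreover have "c \<noteq> b" "c \<noteq> a" using nc span_base by force+
    moreover have "d \<noteq> c" "d \<noteq> b" "d \<noteq> a" using nd span_base by force+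
    ultimately have "card {d, c, b, a} = 4" by simp
    obtain B where B: "independent B" "UNIV \<subseteq> span B" "card B = dim (UNIV :: 'a set)"
      using basis_exists[of UNIV] by blast
    have "finite B" using B(3) d3 card_ge_0_finite by force
    then have "card {d, c, b, a} \<le> card B" using independent_span_bound[OF _ ind, of B] B(2) by auto
    then show False using B(3) d3 \<open>card {d, c, b, a} = 4\<close> by simp
  qed
  obtain k1 k2 k3 where dk: "d = k1 *s a + k2 *s b + k3 *s c"
  proof -
    from nd obtain k3 where "d - k3 *s c \<in> span {b, a}" using span_breakdown_eq by blast
    then obtain k2 where "d - k3 *s c - k2 *s b \<in> span {a}" using span_breakdown_eq by blast
    then obtain k1 where "d - k3 *s c - k2 *s b - k1 *s a \<in> span {}" using span_breakdown_eq by blast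
    then have "d = k1 *s a + k2 *s b + k3 *s c" by (simp add: algebra_simps)
    then show ?thesis using that by blast
  qed
  have aab: "mult a a = b" by (simp add: a_def b_def)
  have "mult d a = k1 *s b" unfolding dk by (simp add: addL scL a2 a3 aab)
  then have "k1 = 0" using a4[of a] nb0 by simp
  then have m13: "mult x c = k2 *s b + k3 *s c" using dk d_def by simp
  have ind: "c1 = 0 \<and> c2 = 0 \<and> c3 = 0" if h: "c1 *s x + c2 *s b + c3 *s c = 0" for c1 c2 c3
  proof -
    have "c3 = 0"
    proof (rule ccontr)
      assume "c3 \<noteq> 0"
      moreover have "c1 *s a + c2 *s b \<in> span {b, a}" by (intro span_add span_scale span_base) auto
      ultimately have "c \<in> span {b, a}" using solve_lin[of c3 "c1 *s a + c2 *s b" c] h a_def by simp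
      then show False using nc by simp
    qed
    moreover have "c2 = 0"
    proof (rule ccontr)
      assume "c2 \<noteq> 0"
      moreover have "c1 *s a \<in> span {a}" by (intro span_scale span_base) auto
      ultimately have "b \<in> span {a}" using solve_lin[of c2 "c1 *s a" b] h \<open>c3 = 0\<close> a_def by simp
      then show False using nb by simp
    qed
    ultimately have "c1 *s a = 0" using h a_def by simp
    then show ?thesis using na \<open>c3 = 0\<close> \<open>c2 = 0\<close> by simp
  qed
  have spU: "span {c, b, a} = UNIV"
    using closed_univ[OF _ _ gen, of "{c, b, a}"] m13
    by (simp add: a_def b_def c_def span_base span_add span_scale)
  have sp: "\<exists>c1 c2 c3. v = c1 *s x + c2 *s b + c3 *s c" for v
  proof -
    have "v \<in> span {c, b, a}" using spU by simp
    then obtain k3 where "v - k3 *s c \<in> span {b, a}" using span_breakdown_eq by blast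
    then obtain k2 where "v - k3 *s c - k2 *s b \<in> span {a}" using span_breakdown_eq by blast
    then obtain k1 where "v - k3 *s c - k2 *s b - k1 *s a \<in> span {}" using span_breakdown_eq by blast
    then have "v = k1 *s x + k2 *s b + k3 *s c" by (simp add: algebra_simps a_def)
    then show ?thesis by blast
  qed
  show ?thesis using m13 ind sp by blast
qed

lemma existence:
  assumes gen: "gen_subalgebra scale mult x = UNIV" and d3: "dim (UNIV :: 'a set) = 3"
  shows "\<exists>(p, q) \<in> model_params. alg_isomorphic scale mult cscale3 (model_mult p q)"
proof -
  obtain \<beta> \<gamma> where m13: "mult x (mult x (mult x x)) = \<beta> *s mult x x + \<gamma> *s mult x (mult x x)"
    and ind: "\<forall>c1 c2 c3. c1 *s x + c2 *s mult x x + c3 *s mult x (mult x x) = 0 \<longrightarrow> c1 = 0 \<and> c2 = 0 \<and> c3 = 0"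
    and sp: "\<forall>v. \<exists>c1 c2 c3. v = c1 *s x + c2 *s mult x x + c3 *s mult x (mult x x)"
    using structure_lem[OF gen d3] by blast
  have a2: "mult (mult x x) v = 0" for v using ann[of x 0 v] by simp
  have a3: "mult (mult x (mult x x)) v = 0" for v using ann[of x 1 v] by simp
  have S: "alg_isomorphic scale mult cscale3 (model_mult (t^2 * \<beta>) (t * \<gamma>))" if "t \<noteq> 0" for t
  proof (rule scaled_iso[OF that])
    show "\<And>c1 c2 c3. c1 *s x + c2 *s mult x x + c3 *s mult x (mult x x) = 0 \<Longrightarrow> c1 = 0 \<and> c2 = 0 \<and> c3 = 0"
      using ind by blast
    show "\<And>v. \<exists>c1 c2 c3. v = c1 *s x + c2 *s mult x x + c3 *s mult x (mult x x)"
      using sp by blast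
  qed (rule refl m13 a2 a3)+
  show ?thesis
  proof (cases "\<beta> = 0")
    case False
    define t where "t = 1 / csqrt \<beta>"
    have t0: "t \<noteq> 0" using False by (simp add: t_def)
    have "t^2 * \<beta> = 1" using False by (simp add: t_def power_divide)
    then have "alg_isomorphic scale mult cscale3 (model_mult 1 (t * \<gamma>))" using S[OF t0] by simp
    moreover have "(1, t * \<gamma>) \<in> model_params" by (simp add: model_params_def)
    ultimately show ?thesis by blast
  next
    case True
    show ?thesis
    proof (cases "\<gamma> = 0")
      case False
      have "alg_isomorphic scale mult cscale3 (model_mult 0 1)"
        using S[of "1/\<gamma>"] False True by simp
      moreover have "(0, 1) \<in> model_params" by (simp add: model_params_def)
      ultimately show ?thesis by blast
    next
      case g: True
      have "alg_isomorphic scale mult cscale3 (model_mult 0 0)"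
        using S[of 1] g True by simp
      moreover have "(0, 0) \<in> model_params" by (simp add: model_params_def)
      ultimately show ?thesis by blast
    qed
  qed
qed

end

lemma uniq:
  assumes iso: "alg_iso cscale3 (model_mult p q) cscale3 (model_mult p' q') f"
  shows "p = (fst (f (1,0,0)))^2 * p' \<and> q = fst (f (1,0,0)) * q' \<and> fst (f (1,0,0)) \<noteq> 0"
proof -
  have bij: "bij f" and add: "\<And>x y. f (x + y) = f x + f y"
    and sc: "\<And>c x. f (cscale3 c x) = cscale3 c (f x)"
    and mm: "\<And>x y. f (model_mult p q x y) = model_mult p' q' (f x) (f y)"
    using iso unfolding alg_iso_def by auto
  have inj: "inj f" using bij bij_def by blast
  have f0: "f 0 = 0" using add[of 0 0] by simp
  define w where "w = f (1,0,0)"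
  define c where "c = fst w"
  define F2 where "F2 = f (0,1,0)"
  define F3 where "F3 = f (0,0,1)"
  have lin: "f (0, \<alpha>, \<beta>) = cscale3 \<alpha> F2 + cscale3 \<beta> F3" for \<alpha> \<beta>
  proof -
    have "(0, \<alpha>, \<beta>) = cscale3 \<alpha> (0,1,0) + cscale3 \<beta> (0,0,1)" by (simp add: cscale3_def)
    then show ?thesis unfolding F2_def F3_def by (simp add: add sc)
  qed
  have e2: "model_mult p q (1,0,0) (1,0,0) = (0,1,0)" by (simp add: model_mult_def)
  have e3: "model_mult p q (1,0,0) (0,1,0) = (0,0,1)" by (simp add: model_mult_def)
  have F2: "F2 = model_mult p' q' w w"
    unfolding F2_def w_def using mm[of "(1,0,0)" "(1,0,0)"] e2 by simp
  have F3: "F3 = model_mult p' q' w F2"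
    unfolding F3_def F2_def w_def using mm[of "(1,0,0)" "(0,1,0)"] e3 by simp
  have G: "model_mult p' q' w F3 = cscale3 p F2 + cscale3 q F3"
  proof -
    have "model_mult p' q' w F3 = f (model_mult p q (1,0,0) (0,0,1))"
      unfolding F3_def w_def by (simp add: mm)
    also have "model_mult p q (1,0,0) (0,0,1) = (0, p, q)" by (simp add: model_mult_def)
    finally show ?thesis using lin by simp
  qed
  have ident: "model_mult p' q' w F3 = cscale3 (c^2 * p') F2 + cscale3 (c * q') F3"
    unfolding F3 F2 c_def by (simp add: model_mult_def cscale3_def prod_eq_iff power2_eq_square algebra_simps)
  have "cscale3 (p - c^2 * p') F2 + cscale3 (q - c * q') F3 = 0"
    using G ident by (simp add: cscale3_def prod_eq_iff algebra_simps)
  then have "f (0, p - c^2 * p', q - c * q') = f 0" using lin f0 by simp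
  then have "(0, p - c^2 * p', q - c * q') = (0::complex \<times> complex \<times> complex)" using inj by (meson injD)
  then have r: "p = c^2 * p'" "q = c * q'" by (auto simp: zero_prod_def)
  have "c \<noteq> 0"
  proof
    assume "c = 0"
    then have "F2 = 0" unfolding F2 c_def by (simp add: model_mult_def zero_prod_def)
    then have "f (0,1,0) = f 0" using f0 F2_def by simp
    then have "(0,1,0) = (0::complex \<times> complex \<times> complex)" using inj by (meson injD)
    then show False by (simp add: zero_prod_def)
  qed
  then show ?thesis using r unfolding c_def w_def by simp
qed

lemma cases_fin:
  assumes "(p,q) \<in> model_params" "(p',q') \<in> model_params" "p = c^2*p'" "q = c*q'" "c \<noteq> 0"
  shows "p' = p \<and> (q' = q \<or> (p = 1 \<and> q' = -q))"
proof -
  have P: "(p = 0 \<and> (q = 0 \<or> q = 1)) \<or> p = 1" and P': "(p' = 0 \<and> (q' = 0 \<or> q' = 1)) \<or> p' = 1"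
    using assms(1,2) unfolding model_params_def by auto
  show ?thesis
  proof (cases "p = 1")
    case True
    then have "p' = 1" using P' assms(3) by auto
    then have "c^2 = 1" using True assms(3) by simp
    then have "c = 1 \<or> c = -1" by (simp add: power2_eq_1_iff)
    then show ?thesis using True \<open>p' = 1\<close> assms(4) by auto
  next
    case False
    then have p0: "p = 0" "q = 0 \<or> q = 1" using P by auto
    then have "p' = 0" using assms(3,5) P' by auto
    then have "q' = 0 \<or> q' = 1" using P' by auto
    then show ?thesis using p0 \<open>p' = 0\<close> assms(4,5) by auto
  qed
qed

lemma iso_refl: "alg_iso cscale3 m cscale3 m id"
  unfolding alg_iso_def by simp

lemma iso_neg: "alg_iso cscale3 (model_mult 1 q) cscale3 (model_mult 1 (-q)) (\<lambda>v. (- fst v, fst (snd v), - snd (snd v)))"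
  unfolding alg_iso_def
proof (intro conjI allI)
  let ?f = "\<lambda>v::complex \<times> complex \<times> complex. (- fst v, fst (snd v), - snd (snd v))"
  have "?f \<circ> ?f = id" by (auto simp: fun_eq_iff)
  then show "bij ?f" using o_bij by blast
qed (auto simp: cscale3_def model_mult_def algebra_simps)


theorem corollary4p1:
  fixes scale :: "complex \<Rightarrow> 'a::ab_group_add \<Rightarrow> 'a"
    and mult :: "'a \<Rightarrow> 'a \<Rightarrow> 'a"
  assumes "leibniz_algebra scale mult"
    and "vector_space.dim scale (UNIV :: 'a set) = 3"
    and "cyclic_algebra scale mult"
  shows "(\<exists>(p, q) \<in> model_params.
            alg_isomorphic scale mult cscale3 (model_mult p q))
    \<and> (\<forall>(p, q) \<in> model_params. \<forall>(p', q') \<in> model_params.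
         alg_isomorphic cscale3 (model_mult p q) cscale3 (model_mult p' q')
           \<longleftrightarrow> (p' = p \<and> (q' = q \<or> (p = 1 \<and> q' = - q))))"
proof
  have LA: "vector_space scale"
    "\<And>x y z. mult (x + y) z = mult x z + mult y z"
    "\<And>x y z. mult x (y + z) = mult x y + mult x z"
    "\<And>c x y. mult (scale c x) y = scale c (mult x y)"
    "\<And>c x y. mult x (scale c y) = scale c (mult x y)"
    "\<And>x y z. mult x (mult y z) = mult (mult x y) z + mult y (mult x z)"
    using assms(1) unfolding leibniz_algebra_def by blast+
  interpret vector_space scale by (rule LA(1))
  interpret leib scale mult
    by (unfold_locales) (rule LA(2), rule LA(3), rule LA(4), rule LA(5), rule LA(6))
  obtain x where gen: "gen_subalgebra scale mult x = UNIV"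
    using assms(3) unfolding cyclic_algebra_def by blast
  show "\<exists>(p, q) \<in> model_params. alg_isomorphic scale mult cscale3 (model_mult p q)"
  proof -
    have d: "dim (UNIV::'a set) = 3" using assms(2) .
    from existence[OF gen d] show ?thesis .
  qed
next
  show "\<forall>(p, q) \<in> model_params. \<forall>(p', q') \<in> model_params.
         alg_isomorphic cscale3 (model_mult p q) cscale3 (model_mult p' q')
           \<longleftrightarrow> (p' = p \<and> (q' = q \<or> (p = 1 \<and> q' = - q)))"
  proof (intro ballI, clarify)
    fix p q p' q'
    assume mp: "(p, q) \<in> model_params" and mp': "(p', q') \<in> model_params"
    show "alg_isomorphic cscale3 (model_mult p q) cscale3 (model_mult p' q')
           \<longleftrightarrow> (p' = p \<and> (q' = q \<or> (p = 1 \<and> q' = - q)))"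
    proof
      assume "alg_isomorphic cscale3 (model_mult p q) cscale3 (model_mult p' q')"
      then obtain f where "alg_iso cscale3 (model_mult p q) cscale3 (model_mult p' q') f"
        unfolding alg_isomorphic_def by blast
      from uniq[OF this] show "p' = p \<and> (q' = q \<or> (p = 1 \<and> q' = - q))"
        using cases_fin[OF mp mp'] by blast
    next
      assume h: "p' = p \<and> (q' = q \<or> (p = 1 \<and> q' = - q))"
      show "alg_isomorphic cscale3 (model_mult p q) cscale3 (model_mult p' q')"
      proof (cases "q' = q")
        case True
        then show ?thesis using h iso_refl unfolding alg_isomorphic_def by metis
      next
        case False
        then have "p = 1" "p' = 1" "q' = - q" using h by auto
        then show ?thesis using iso_neg[of q] unfolding alg_isomorphic_def by auto
      qed
    qed
  qed
qed

end
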